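(* Let $(X,x)$ be a pointed diffeological space and let $\mathcal{C}$ be a local generating category of curves of $X$ at $x$. Then the natural map $\operatorname{colim}(\mathcal{C} \hookrightarrow \mathcal{G}(X,x) \to \mathrm{Vect}) \to T_x(X)$ is an epimorphism.
   Context: A diffeological space is a set $X$ together with, for every open subset $U$ of every $\mathbb{R}^n$, a set of functions $U\to X$ called plots, such that constant maps are plots, the composite of a plot with a smooth map $V\to U$ between open subsets of Euclidean spaces is a plot, and a function which is locally a plot is a plot; smooth maps send plots to plots. For a pointed diffeological space $(X,x)$, let $\mathcal{G}(X,x)$ be the category whose objects are plots $p:U\to X$ with $U$ a connected open neighbourhood of $0$ in some $\mathbb{R}^n$ and $p(0)=x$, and whose morphisms $p\to q$ (with $q:V\to X$) are germs at $0$ of smooth maps $f:W\to V$, $W$ an open neighbourhood of $0$ in $U$, with $f(0)=0$ and $p|_W=q\circ f$. The functor $\mathcal{G}(X,x)\to\mathrm{Vect}$ sends $p:U\to X$ to $T_0(U)$ and $[f]$ to $f_*:T_0(U)\to T_0(V)$; its colimit is the internal tangent space $T_x(X)$. A local generating set of curves of $X$ at $x$ is a set $C$ of objects of $\mathcal{G}(X,x)$ with domain $\mathbb{R}$ such that for each object $p:\mathbb{R}\to X$ of $\mathcal{G}(X,x)$ there exist $q\in C$ and a morphism $p\to q$ in $\mathcal{G}(X,x)$. A local generating category of curves of $X$ at $x$ is a subcategory $\mathcal{C}$ of $\mathcal{G}(X,x)$ whose object set is a local generating set of curves. *)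

theory Defs
  imports "HOL-Analysis.Analysis" "HOL-Library.FuncSet"
begin

text \<open>R^n is the set of real sequences vanishing from index n on; the topology is the
product topology on nat => real, which restricts to the Euclidean topology on R^n.\<close>

definition Rn :: "nat \<Rightarrow> (nat \<Rightarrow> real) set" where
  "Rn n = {v. \<forall>i\<ge>n. v i = 0}"

definition origin :: "nat \<Rightarrow> real" where
  "origin = (\<lambda>_. 0)"

definition open_in_Rn :: "nat \<Rightarrow> (nat \<Rightarrow> real) set \<Rightarrow> bool" where
  "open_in_Rn n U \<longleftrightarrow> openin (top_of_set (Rn n)) U"

fun Ck :: "nat \<Rightarrow> nat \<Rightarrow> (nat \<Rightarrow> real) set \<Rightarrow> ((nat \<Rightarrow> real) \<Rightarrow> real) \<Rightarrow> bool" where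
  "Ck 0 m V g = continuous_on V g"
| "Ck (Suc k) m V g = (continuous_on V g \<and>
     (\<forall>i<m. \<exists>h. (\<forall>v\<in>V. ((\<lambda>t. g (v(i := v i + t))) has_real_derivative h v) (at 0))
                 \<and> Ck k m V h))"

definition smooth_fun :: "nat \<Rightarrow> (nat \<Rightarrow> real) set \<Rightarrow> ((nat \<Rightarrow> real) \<Rightarrow> real) \<Rightarrow> bool" where
  "smooth_fun m V g \<longleftrightarrow> (\<forall>k. Ck k m V g)"

definition smooth_map :: "nat \<Rightarrow> (nat \<Rightarrow> real) set \<Rightarrow> ((nat \<Rightarrow> real) \<Rightarrow> (nat \<Rightarrow> real)) \<Rightarrow> bool" where
  "smooth_map m V g \<longleftrightarrow> (\<forall>j. smooth_fun m V (\<lambda>v. g v j))"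

text \<open>Tangent map f_* : T_0(R^n) = R^n \<rightarrow> R^m = T_0(R^m) at the origin (Jacobian at 0).\<close>
definition push :: "nat \<Rightarrow> nat \<Rightarrow> ((nat \<Rightarrow> real) \<Rightarrow> (nat \<Rightarrow> real)) \<Rightarrow> (nat \<Rightarrow> real) \<Rightarrow> (nat \<Rightarrow> real)" where
  "push n m f v = (\<lambda>j. if j < m then (\<Sum>i<n. deriv (\<lambda>t. f (origin(i := t)) j) 0 * v i) else 0)"

text \<open>A plot is a triple (n, U, p) with U open in R^n and p : U \<rightarrow> X (extensional on U).\<close>
type_synonym 'a plot = "nat \<times> (nat \<Rightarrow> real) set \<times> ((nat \<Rightarrow> real) \<Rightarrow> 'a)"

definition diffeology :: "'a set \<Rightarrow> 'a plot set \<Rightarrow> bool" where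
  "diffeology X D \<longleftrightarrow>
     (\<forall>(n, U, p)\<in>D. open_in_Rn n U \<and> p \<in> extensional U \<and> p ` U \<subseteq> X) \<and>
     (\<forall>n U y. open_in_Rn n U \<and> y \<in> X \<longrightarrow> (n, U, restrict (\<lambda>_. y) U) \<in> D) \<and>
     (\<forall>n U p m V g. (n, U, p) \<in> D \<and> open_in_Rn m V \<and> g ` V \<subseteq> U \<and> smooth_map m V g
        \<longrightarrow> (m, V, restrict (p \<circ> g) V) \<in> D) \<and>
     (\<forall>n U p. open_in_Rn n U \<and> p \<in> extensional U \<and> p ` U \<subseteq> X \<and>
        (\<forall>u\<in>U. \<exists>W. open_in_Rn n W \<and> u \<in> W \<and> W \<subseteq> U \<and> (n, W, restrict p W) \<in> D)
        \<longrightarrow> (n, U, p) \<in> D)"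

definition obj_G :: "'a plot set \<Rightarrow> 'a \<Rightarrow> 'a plot set" where
  "obj_G D x = {(n, U, p). (n, U, p) \<in> D \<and> connected U \<and> origin \<in> U \<and> p origin = x}"

definition mor_rep :: "'a plot \<Rightarrow> 'a plot \<Rightarrow> (nat \<Rightarrow> real) set \<times> ((nat \<Rightarrow> real) \<Rightarrow> (nat \<Rightarrow> real)) \<Rightarrow> bool" where
  "mor_rep p q r \<longleftrightarrow> (case p of (n, U, pp) \<Rightarrow> case q of (m, V, qq) \<Rightarrow> case r of (W, f) \<Rightarrow>
      open_in_Rn n W \<and> origin \<in> W \<and> W \<subseteq> U \<and> f ` W \<subseteq> V \<and> smooth_map n W f \<and>
      f origin = origin \<and> (\<forall>w\<in>W. pp w = qq (f w)))"

text \<open>The germ at 0 of a representative: all representatives agreeing with it near 0.\<close>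
definition germ_of :: "'a plot \<Rightarrow> 'a plot \<Rightarrow> (nat \<Rightarrow> real) set \<times> ((nat \<Rightarrow> real) \<Rightarrow> (nat \<Rightarrow> real))
    \<Rightarrow> ((nat \<Rightarrow> real) set \<times> ((nat \<Rightarrow> real) \<Rightarrow> (nat \<Rightarrow> real))) set" where
  "germ_of p q r = {r'. mor_rep p q r' \<and>
      (\<exists>W''. open_in_Rn (fst p) W'' \<and> origin \<in> W'' \<and> W'' \<subseteq> fst r \<inter> fst r' \<and>
             (\<forall>w\<in>W''. snd r w = snd r' w))}"

definition mor_G :: "'a plot set \<Rightarrow> 'a \<Rightarrow>
    ('a plot \<times> 'a plot \<times> ((nat \<Rightarrow> real) set \<times> ((nat \<Rightarrow> real) \<Rightarrow> (nat \<Rightarrow> real))) set) set" where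
  "mor_G D x = {(p, q, germ_of p q r) | p q r. p \<in> obj_G D x \<and> q \<in> obj_G D x \<and> mor_rep p q r}"

definition subcategory_G :: "'a plot set \<Rightarrow> 'a \<Rightarrow> 'a plot set \<Rightarrow>
    ('a plot \<times> 'a plot \<times> ((nat \<Rightarrow> real) set \<times> ((nat \<Rightarrow> real) \<Rightarrow> (nat \<Rightarrow> real))) set) set \<Rightarrow> bool" where
  "subcategory_G D x Ob Mo \<longleftrightarrow>
     Ob \<subseteq> obj_G D x \<and> Mo \<subseteq> mor_G D x \<and>
     (\<forall>(p, q, F)\<in>Mo. p \<in> Ob \<and> q \<in> Ob) \<and>
     (\<forall>p\<in>Ob. (p, p, germ_of p p (fst (snd p), id)) \<in> Mo) \<and>
     (\<forall>p q r F H. (p, q, F) \<in> Mo \<longrightarrow> (q, r, H) \<in> Mo \<longrightarrow>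
        (\<forall>f\<in>F. \<forall>h\<in>H. (p, r, germ_of p r ({w\<in>fst f. snd f w \<in> fst h}, snd h \<circ> snd f)) \<in> Mo))"

definition local_generating_set :: "'a plot set \<Rightarrow> 'a \<Rightarrow> 'a plot set \<Rightarrow> bool" where
  "local_generating_set D x C \<longleftrightarrow>
     C \<subseteq> obj_G D x \<and> (\<forall>q\<in>C. fst q = 1 \<and> fst (snd q) = Rn 1) \<and>
     (\<forall>p\<in>obj_G D x. fst p = 1 \<and> fst (snd p) = Rn 1 \<longrightarrow> (\<exists>q\<in>C. \<exists>r. mor_rep p q r))"

definition local_generating_category :: "'a plot set \<Rightarrow> 'a \<Rightarrow> 'a plot set \<Rightarrow>
    ('a plot \<times> 'a plot \<times> ((nat \<Rightarrow> real) set \<times> ((nat \<Rightarrow> real) \<Rightarrow> (nat \<Rightarrow> real))) set) set \<Rightarrow> bool" where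
  "local_generating_category D x Ob Mo \<longleftrightarrow> subcategory_G D x Ob Mo \<and> local_generating_set D x Ob"

definition linear_on_Rn :: "nat \<Rightarrow> ((nat \<Rightarrow> real) \<Rightarrow> 'w::real_vector) \<Rightarrow> bool" where
  "linear_on_Rn n \<phi> \<longleftrightarrow> (\<forall>u\<in>Rn n. \<forall>v\<in>Rn n. \<forall>a::real.
      \<phi> (\<lambda>i. u i + v i) = \<phi> u + \<phi> v \<and> \<phi> (\<lambda>i. a * v i) = a *\<^sub>R \<phi> v)"

text \<open>A cocone over G(X,x) with vertex the real vector space 'w; by the universal property
these correspond exactly to linear maps T_x(X) \<rightarrow> 'w.\<close>
definition cocone_G :: "'a plot set \<Rightarrow> 'a \<Rightarrow> ('a plot \<Rightarrow> (nat \<Rightarrow> real) \<Rightarrow> 'w::real_vector) \<Rightarrow> bool" where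
  "cocone_G D x \<phi> \<longleftrightarrow>
     (\<forall>p\<in>obj_G D x. linear_on_Rn (fst p) (\<phi> p)) \<and>
     (\<forall>p\<in>obj_G D x. \<forall>q\<in>obj_G D x. \<forall>r. mor_rep p q r \<longrightarrow>
        (\<forall>v\<in>Rn (fst p). \<phi> q (push (fst p) (fst q) (snd r) v) = \<phi> p v))"

end

theory Submission
  imports Defs
begin

lemma Ck_sincos: "Ck k 1 V (\<lambda>w. a * sin (w 0) + b * cos (w 0))"
proof (induction k arbitrary: a b)
  case 0
  show ?case by (simp, intro continuous_intros continuous_on_product_coordinates[THEN continuous_on_subset]; simp)
next
  case (Suc k)
  have c: "continuous_on V (\<lambda>w::nat\<Rightarrow>real. a * sin (w 0) + b * cos (w 0))"
    by (intro continuous_intros continuous_on_product_coordinates[THEN continuous_on_subset]; simp)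
  have d: "((\<lambda>t. a * sin ((v(0 := v 0 + t)) 0) + b * cos ((v(0 := v 0 + t)) 0)) has_real_derivative
        ((- b) * sin (v 0) + a * cos (v 0))) (at 0)" for v :: "nat \<Rightarrow> real"
    by (auto intro!: derivative_eq_intros)
  have d': "\<forall>v\<in>V. ((\<lambda>t. a * sin ((v(0 := v 0 + t)) 0) + b * cos ((v(0 := v 0 + t)) 0)) has_real_derivative
        (\<lambda>w. (- b) * sin (w 0) + a * cos (w 0)) v) (at 0)" using d by simp
  have "\<forall>i<1. \<exists>h. (\<forall>v\<in>V. ((\<lambda>t. (\<lambda>w. a * sin (w 0) + b * cos (w 0)) (v(i := v i + t))) has_real_derivative h v) (at 0)) \<and> Ck k 1 V h"
    using d' Suc[of "-b" a] by auto
  then show ?case using c by (simp only: Ck.simps)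
qed

lemma smooth_sinv: "smooth_map 1 V (\<lambda>w j. sin (w 0) * c j)"
  unfolding smooth_map_def smooth_fun_def
  using Ck_sincos[of _ V "c _" 0] by (simp add: mult.commute)


lemma Rn1_connected: "connected (Rn 1)"
proof -
  have eq: "Rn 1 = range (\<lambda>t. origin(0:=t))"
  proof
    show "Rn 1 \<subseteq> range (\<lambda>t. origin(0:=t))"
    proof
      fix v assume "v \<in> Rn 1"
      then have "v = origin(0 := v 0)" by (auto simp: Rn_def origin_def fun_eq_iff)
      then show "v \<in> range (\<lambda>t. origin(0:=t))" by blast
    qed
  qed (auto simp: Rn_def origin_def)
  have "continuous_on UNIV (\<lambda>t::real. origin(0:=t))"
  proof (intro continuous_on_coordinatewise_then_product)
    fix i :: nat
    show "continuous_on UNIV (\<lambda>t::real. (origin(0:=t)) i)"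
      by (cases "i = 0") (auto simp: origin_def)
  qed
  then show ?thesis unfolding eq by (intro connected_continuous_image) auto
qed

lemma open_Rn_self: "open_in_Rn n (Rn n)"
  unfolding open_in_Rn_def by simp

lemma small_segment:
  assumes "open_in_Rn n U" "origin \<in> U" "v \<in> Rn n"
  shows "\<exists>d>0. \<forall>s. \<bar>s\<bar> < d \<longrightarrow> (\<lambda>j. s * v j) \<in> U"
proof -
  obtain T where T: "open T" "U = Rn n \<inter> T"
    using assms(1) unfolding open_in_Rn_def by (auto simp: openin_open)
  have "continuous_on UNIV (\<lambda>s::real. (\<lambda>j. s * v j))"
    by (intro continuous_on_coordinatewise_then_product continuous_intros)
  then have o: "open ((\<lambda>s::real. (\<lambda>j. s * v j)) -` T)" using T(1) by (rule open_vimage[rotated])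
  have "(\<lambda>j. 0 * v j) = origin" by (simp add: origin_def)
  then have "0 \<in> (\<lambda>s::real. (\<lambda>j. s * v j)) -` T" using assms(2) T(2) by auto
  then obtain d where d: "d > 0" "\<forall>y. dist y 0 < d \<longrightarrow> y \<in> (\<lambda>s::real. (\<lambda>j. s * v j)) -` T"
    using o unfolding open_dist by blast
  have "(\<lambda>j. s * v j) \<in> Rn n" for s using assms(3) by (auto simp: Rn_def)
  then show ?thesis using d T(2) by (auto simp: dist_real_def)
qed

lemma linear_scale:
  assumes "linear_on_Rn n f" "v \<in> Rn n"
  shows "f (\<lambda>i. a * v i) = a *\<^sub>R f v"
  using assms unfolding linear_on_Rn_def by blast


lemma key:
  assumes dif: "diffeology X D" and P: "(n, U, p) \<in> obj_G D x"
    and v: "v \<in> Rn n" and UU: "\<forall>s. \<bar>s\<bar> < d \<longrightarrow> (\<lambda>j. s * v j) \<in> U"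
    and cc: "cocone_G D x \<phi>"
  defines "g \<equiv> (\<lambda>(w::nat\<Rightarrow>real) (j::nat). sin (w 0) * v j)"
  defines "c \<equiv> (1::nat, Rn 1, restrict (p \<circ> g) (Rn 1))"
  assumes d: "\<bar>1\<bar> < d"
  shows "c \<in> obj_G D x \<and> mor_rep c (n, U, p) (Rn 1, g) \<and> \<phi> (n, U, p) v = \<phi> c (origin(0:=1))"
proof -
  have PD: "(n, U, p) \<in> D" "origin \<in> U" "p origin = x" using P by (auto simp: obj_G_def)
  have gU: "g ` Rn 1 \<subseteq> U"
  proof
    fix y assume "y \<in> g ` Rn 1"
    then obtain w where "y = g w" by auto
    moreover have "\<bar>sin (w 0)\<bar> < d" using abs_sin_le_one[of "w 0"] d by linarith
    ultimately show "y \<in> U" using UU unfolding g_def by blast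
  qed
  have sm: "smooth_map 1 (Rn 1) g" unfolding g_def by (rule smooth_sinv)
  have ax3: "\<forall>n U p m V g. (n, U, p) \<in> D \<and> open_in_Rn m V \<and> g ` V \<subseteq> U \<and> smooth_map m V g
        \<longrightarrow> (m, V, restrict (p \<circ> g) V) \<in> D"
    using dif unfolding diffeology_def by (elim conjE) assumption
  have cD0: "c \<in> D" unfolding c_def
    using ax3[rule_format, of n U p 1 "Rn 1" g] PD(1) open_Rn_self gU sm by blast
  have o1: "origin \<in> Rn 1" by (simp add: Rn_def origin_def)
  have g0: "g origin = origin" by (simp add: g_def origin_def fun_eq_iff)
  have cD: "c \<in> obj_G D x" using cD0 Rn1_connected o1 g0 PD(3)
    unfolding obj_G_def c_def by auto
  have mr: "mor_rep c (n, U, p) (Rn 1, g)"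
    unfolding mor_rep_def c_def using open_Rn_self o1 gU sm g0 by auto
  have e: "origin(0:=1) \<in> Rn 1" by (simp add: Rn_def origin_def)
  have pv: "push 1 n g (origin(0:=1)) = v"
  proof
    fix j
    have dv: "deriv (\<lambda>t. g (origin(0 := t)) j) 0 = v j"
    proof -
      have "((\<lambda>t. g (origin(0 := t)) j) has_real_derivative cos 0 * v j) (at 0)"
        unfolding g_def by (auto intro!: derivative_eq_intros)
      then show ?thesis by (simp add: DERIV_imp_deriv)
    qed
    show "push 1 n g (origin(0:=1)) j = v j"
      using v dv by (auto simp: push_def Rn_def)
  qed
  have "\<phi> (n, U, p) (push 1 n g (origin(0:=1))) = \<phi> c (origin(0:=1))"
  proof -
    have cc2: "\<forall>p\<in>obj_G D x. \<forall>q\<in>obj_G D x. \<forall>r. mor_rep p q r \<longrightarrow>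
        (\<forall>v\<in>Rn (fst p). \<phi> q (push (fst p) (fst q) (snd r) v) = \<phi> p v)"
      using cc unfolding cocone_G_def by (elim conjE) assumption
    have "fst c = 1" by (simp add: c_def)
    then show ?thesis using cc2[rule_format, OF cD P mr] e by (simp add: c_def)
  qed
  then show ?thesis using cD mr pv by simp
qed

theorem proposition3p3:
  fixes X :: "'a set" and D :: "'a plot set" and x :: 'a
    and Ob :: "'a plot set"
    and Mo :: "('a plot \<times> 'a plot \<times> ((nat \<Rightarrow> real) set \<times> ((nat \<Rightarrow> real) \<Rightarrow> (nat \<Rightarrow> real))) set) set"
    and \<phi> \<psi> :: "'a plot \<Rightarrow> (nat \<Rightarrow> real) \<Rightarrow> 'w::real_vector"
  assumes "diffeology X D" and "x \<in> X"
    and "local_generating_category D x Ob Mo"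
    and "cocone_G D x \<phi>" and "cocone_G D x \<psi>"
    and "\<forall>p\<in>Ob. \<forall>v\<in>Rn (fst p). \<phi> p v = \<psi> p v"
  shows "\<forall>p\<in>obj_G D x. \<forall>v\<in>Rn (fst p). \<phi> p v = \<psi> p v"
proof (intro ballI)
  fix P v assume P0: "P \<in> obj_G D x" and v0: "v \<in> Rn (fst P)"
  obtain n U p where Pe: "P = (n, U, p)" by (cases P) auto
  have P: "(n, U, p) \<in> obj_G D x" and v: "v \<in> Rn n" using P0 v0 Pe by auto
  have oU: "open_in_Rn n U" "origin \<in> U" using P assms(1) unfolding obj_G_def diffeology_def by auto
  obtain d where d: "d > 0" "\<forall>s. \<bar>s\<bar> < d \<longrightarrow> (\<lambda>j. s * v j) \<in> U"
    using small_segment[OF oU v] by blast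
  define v' where "v' = (\<lambda>j. (d/2) * v j)"
  have v': "v' \<in> Rn n" using v by (auto simp: v'_def Rn_def)
  have UU: "\<forall>s. \<bar>s\<bar> < 2 \<longrightarrow> (\<lambda>j. s * v' j) \<in> U"
  proof (intro allI impI)
    fix s :: real assume "\<bar>s\<bar> < 2"
    then have "\<bar>s * (d/2)\<bar> < d" using d(1) by (auto simp: abs_mult)
    then have "(\<lambda>j. (s * (d/2)) * v j) \<in> U" using d(2) by blast
    then show "(\<lambda>j. s * v' j) \<in> U" by (simp add: v'_def mult.assoc)
  qed
  define g where "g \<equiv> (\<lambda>(w::nat\<Rightarrow>real) (j::nat). sin (w 0) * v' j)"
  define c where "c \<equiv> (1::nat, Rn 1, restrict (p \<circ> g) (Rn 1))"
  have k1: "c \<in> obj_G D x" "\<phi> (n, U, p) v' = \<phi> c (origin(0:=1))"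
    using key[OF assms(1) P v' UU assms(4)] unfolding g_def c_def by auto
  have k2: "\<psi> (n, U, p) v' = \<psi> c (origin(0:=1))"
    using key[OF assms(1) P v' UU assms(5)] unfolding g_def c_def by auto
  have lg: "local_generating_set D x Ob" "Ob \<subseteq> obj_G D x"
    using assms(3) unfolding local_generating_category_def subcategory_G_def by auto
  have "fst c = 1 \<and> fst (snd c) = Rn 1" by (simp add: c_def)
  then obtain q r where q: "q \<in> Ob" "mor_rep c q r"
    using lg(1) k1(1) unfolding local_generating_set_def by blast
  have q1: "fst q = 1" using lg(1) q(1) unfolding local_generating_set_def by auto
  have qG: "q \<in> obj_G D x" using q(1) lg(2) by auto
  have e: "origin(0:=1) \<in> Rn (fst c)" by (simp add: Rn_def origin_def c_def)
  define w where "w = push (fst c) (fst q) (snd r) (origin(0:=1))"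
  have w: "w \<in> Rn (fst q)" by (simp add: w_def push_def Rn_def)
  have a1: "\<phi> q w = \<phi> c (origin(0:=1))"
    using assms(4) k1(1) qG q(2) e unfolding cocone_G_def w_def by blast
  have a2: "\<psi> q w = \<psi> c (origin(0:=1))"
    using assms(5) k1(1) qG q(2) e unfolding cocone_G_def w_def by blast
  have "\<phi> q w = \<psi> q w" using assms(6) q(1) w by blast
  then have eqv': "\<phi> P v' = \<psi> P v'" using a1 a2 k1(2) k2 Pe by simp
  have vv: "v = (\<lambda>i. (2/d) * v' i)" using d(1) by (auto simp: v'_def fun_eq_iff)
  have l1: "linear_on_Rn n (\<phi> P)" "linear_on_Rn n (\<psi> P)"
    using assms(4,5) P0 Pe unfolding cocone_G_def by auto
  show "\<phi> P v = \<psi> P v"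
    using linear_scale[OF l1(1) v', of "2/d"] linear_scale[OF l1(2) v', of "2/d"] eqv' vv by simp
qed

end
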